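(* Let $t\ge 2$ be an integer, let $\mathcal A$ be an alphabet, and let $\mathfrak C_t$ be the simple 2-level network $([t,t+1],[t,t])$, with an adversary able to corrupt up to $t$ of the edges outgoing from the source. Then, for every positive integer $i$, the $i$-shot capacity of $\mathfrak C_t$ (in Scenario A.1 as well as in Scenario A.2) is \[C_i(\mathfrak C_t,\mathcal A,\mathbf A_{\mathfrak C_t})=1.\]
   Context: An alphabet is a finite set $\mathcal A$ with $|\mathcal A|\ge 2$. For positive integers $a_j,b_j$, the simple 2-level network $([a_1,\dots,a_n],[b_1,\dots,b_n])$ is the directed acyclic multigraph with a source $S$, intermediate nodes $V_1,\dots,V_n$, a single terminal $T$, exactly $a_j$ parallel edges from $S$ to $V_j$ and exactly $b_j$ parallel edges from $V_j$ to $T$, and no other edges. Each edge carries one symbol of $\mathcal A$. A network code is a family $\mathcal F=\{\mathcal F_{V_j}:\mathcal A^{a_j}\to\mathcal A^{b_j}\}_j$. In one use, the source sends $x\in\mathcal A^{a_1+\dots+a_n}$ on its outgoing edges (the set $\mathcal U_S$), the adversary may replace the symbols on up to $t$ edges of $\mathcal U_S$ by arbitrary symbols, each $V_j$ applies $\mathcal F_{V_j}$ to the symbols it receives and sends the result to $T$. The fan-out set $\Omega_{\mathcal F}(x)$ is the set of all vectors $T$ can receive. For $i$ uses with the same network code, the input is $(x^1,\dots,x^i)$ and: in Scenario A.1 the adversary fixes one set $W\subseteq\mathcal U_S$ with $|W|\le t$ and in each of the $i$ rounds may alter (arbitrarily, independently per round) only symbols on edges of $W$; in Scenario A.2 the adversary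 may choose a different set of at most $t$ edges in each round, so the fan-out set is $\Omega_{\mathcal F}(x^1)\times\dots\times\Omega_{\mathcal F}(x^i)$. A nonempty code $C\subseteq(\mathcal A^{a_1+\dots+a_n})^i$ is unambiguous if distinct codewords have disjoint fan-out sets. The $i$-shot capacity $C_i$ is the maximum of $\log_{|\mathcal A|}(|C|)/i$ over all network codes and unambiguous codes $C$. *)

theory Defs
  imports Main Complex_Main
begin

(* Simple 2-level network ([a_1..a_n],[b_1..b_n]) given by lists as, bs of equal length n.
   Source outgoing edges U_S are indexed 0..<sum_list as; the edges into V_j are the
   positions sum_list (take j as) ..< sum_list (take j as) + as!j. *)

definition vecs :: "'a set \<Rightarrow> nat \<Rightarrow> 'a list set" where
  "vecs A m = {u. length u = m \<and> set u \<subseteq> A}"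

definition alphabet :: "'a set \<Rightarrow> bool" where
  "alphabet A \<longleftrightarrow> finite A \<and> card A \<ge> 2"

definition n_src :: "nat list \<Rightarrow> nat" where
  "n_src as = sum_list as"

definition slice :: "nat list \<Rightarrow> nat \<Rightarrow> 'a list \<Rightarrow> 'a list" where
  "slice as j y = take (as ! j) (drop (sum_list (take j as)) y)"

definition network_code :: "'a set \<Rightarrow> nat list \<Rightarrow> nat list \<Rightarrow> ('a list \<Rightarrow> 'a list) list \<Rightarrow> bool" where
  "network_code A as bs F \<longleftrightarrow> length as = length bs \<and> length F = length as \<and>
     (\<forall>j < length as. \<forall>u \<in> vecs A (as ! j). (F ! j) u \<in> vecs A (bs ! j))"

definition net_out :: "nat list \<Rightarrow> ('a list \<Rightarrow> 'a list) list \<Rightarrow> 'a list \<Rightarrow> 'a list" where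
  "net_out as F y = concat (map (\<lambda>j. (F ! j) (slice as j y)) [0..<length as])"

definition fanout :: "'a set \<Rightarrow> nat list \<Rightarrow> ('a list \<Rightarrow> 'a list) list \<Rightarrow> nat \<Rightarrow> 'a list \<Rightarrow> 'a list set" where
  "fanout A as F t x = {net_out as F y | y. \<exists>W. W \<subseteq> {..<n_src as} \<and> card W \<le> t \<and>
       y \<in> vecs A (n_src as) \<and> (\<forall>e < n_src as. e \<notin> W \<longrightarrow> y ! e = x ! e)}"

datatype scenario = A1 | A2

fun fanout_multi :: "scenario \<Rightarrow> 'a set \<Rightarrow> nat list \<Rightarrow> ('a list \<Rightarrow> 'a list) list \<Rightarrow> nat \<Rightarrow> 'a list list \<Rightarrow> 'a list list set" where
  "fanout_multi A1 A as F t xs = {zs. length zs = length xs \<and>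
       (\<exists>W. W \<subseteq> {..<n_src as} \<and> card W \<le> t \<and>
          (\<forall>r < length xs. \<exists>y. y \<in> vecs A (n_src as) \<and>
              (\<forall>e < n_src as. e \<notin> W \<longrightarrow> y ! e = xs ! r ! e) \<and> zs ! r = net_out as F y))}"
| "fanout_multi A2 A as F t xs = {zs. length zs = length xs \<and>
       (\<forall>r < length xs. zs ! r \<in> fanout A as F t (xs ! r))}"

definition unambiguous :: "scenario \<Rightarrow> 'a set \<Rightarrow> nat list \<Rightarrow> ('a list \<Rightarrow> 'a list) list \<Rightarrow> nat \<Rightarrow> nat \<Rightarrow> 'a list list set \<Rightarrow> bool" where
  "unambiguous sc A as F t i C \<longleftrightarrow> C \<noteq> {} \<and>
     C \<subseteq> {xs. length xs = i \<and> (\<forall>r < i. xs ! r \<in> vecs A (n_src as))} \<and>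
     (\<forall>c \<in> C. \<forall>c' \<in> C. c \<noteq> c' \<longrightarrow> fanout_multi sc A as F t c \<inter> fanout_multi sc A as F t c' = {})"

definition capacity :: "scenario \<Rightarrow> 'a set \<Rightarrow> nat list \<Rightarrow> nat list \<Rightarrow> nat \<Rightarrow> nat \<Rightarrow> real" where
  "capacity sc A as bs t i = Max {log (real (card A)) (real (card C)) / real i | F C.
      network_code A as bs F \<and> unambiguous sc A as F t i C}"

end

theory Submission
  imports Defs
begin

lemma net_out2: "net_out [a1, a2] F y = (F!0) (take a1 y) @ (F!1) (take a2 (drop a1 y))"
  by (simp add: net_out_def slice_def upt_rec)

lemma nsrc2: "n_src [t, t+1] = 2*t+1" by (simp add: n_src_def)

lemma A1_sub:
  assumes "zs \<in> fanout_multi A1 A as F t xs"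
  shows "zs \<in> fanout_multi sc A as F t xs"
proof (cases sc)
  case A1 then show ?thesis using assms by simp
next
  case A2
  from assms obtain W where W: "W \<subseteq> {..<n_src as}" "card W \<le> t" and len: "length zs = length xs"
    and r: "\<forall>r < length xs. \<exists>y. y \<in> vecs A (n_src as) \<and>
              (\<forall>e < n_src as. e \<notin> W \<longrightarrow> y ! e = xs ! r ! e) \<and> zs ! r = net_out as F y"
    by auto
  have "zs ! k \<in> fanout A as F t (xs ! k)" if k: "k < length xs" for k
  proof -
    obtain y where y: "y \<in> vecs A (n_src as)" "\<forall>e < n_src as. e \<notin> W \<longrightarrow> y ! e = xs ! k ! e"
      "zs ! k = net_out as F y" using r k by blast
    show ?thesis unfolding fanout_def using y W by blast
  qed
  then show ?thesis using A2 len by simp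
qed

lemma nsrcS[simp]: "n_src [a, Suc a] = Suc (2*a)" by (simp add: n_src_def)

lemma vecs_nth: "v \<in> vecs A n \<Longrightarrow> e < n \<Longrightarrow> v!e \<in> A"
  unfolding vecs_def using nth_mem by blast

lemma collide:
  fixes c c' :: "'a list list"
  assumes lc: "length c = i" and lc': "length c' = i"
    and vc: "\<forall>r<i. c!r \<in> vecs A (2*t+1)" and vc': "\<forall>r<i. c'!r \<in> vecs A (2*t+1)"
    and eq0: "\<forall>r<i. c!r!0 = c'!r!0"
  shows "\<exists>zs. zs \<in> fanout_multi A1 A [t,t+1] F t c \<and> zs \<in> fanout_multi A1 A [t,t+1] F t c'"
proof -
  define ys where "ys r = map (\<lambda>e. if 1 \<le> e \<and> e \<le> t then c'!r!e else c!r!e) [0..<2*t+1]" for r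
  define zs where "zs = map (\<lambda>r. net_out [t,t+1] F (ys r)) [0..<i]"
  have ysn: "ys r ! e = (if 1 \<le> e \<and> e \<le> t then c'!r!e else c!r!e)" if "e < 2*t+1" for r e
    unfolding ys_def using that by (simp del: upt_Suc)
  have zsn: "zs ! r = net_out [t,t+1] F (ys r)" if "r < i" for r
    unfolding zs_def using that by simp
  have ysv: "ys r \<in> vecs A (2*t+1)" if "r < i" for r
  proof -
    have "\<forall>e<2*t+1. c!r!e \<in> A \<and> c'!r!e \<in> A"
      using vc' vc that vecs_nth by blast
    then show ?thesis unfolding ys_def vecs_def by auto
  qed
  have "zs \<in> fanout_multi A1 A [t,t+1] F t c"
  proof -
    have nn: "n_src [t,t+1] = 2*t+1" by (simp add: n_src_def)
    have "{1..t} \<subseteq> {..<n_src [t,t+1]}" "card {1..t} \<le> t" by (auto simp:)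
    moreover have "\<forall>r < length c. \<exists>y. y \<in> vecs A (n_src [t,t+1]) \<and>
              (\<forall>e < n_src [t,t+1]. e \<notin> {1..t} \<longrightarrow> y ! e = c ! r ! e) \<and> zs ! r = net_out [t,t+1] F y"
    proof (intro allI impI)
      fix r assume "r < length c"
      then show "\<exists>y. y \<in> vecs A (n_src [t,t+1]) \<and>
              (\<forall>e < n_src [t,t+1]. e \<notin> {1..t} \<longrightarrow> y ! e = c ! r ! e) \<and> zs ! r = net_out [t,t+1] F y"
        using ysv lc by (intro exI[of _ "ys r"]) (auto simp: ysn zsn simp del: upt_Suc)
    qed
    ultimately show ?thesis using lc by (auto simp: zs_def)
  qed
  moreover have "zs \<in> fanout_multi A1 A [t,t+1] F t c'"
  proof -
    have nn: "n_src [t,t+1] = 2*t+1" by (simp add: n_src_def)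
    have "{t+1..<2*t+1} \<subseteq> {..<n_src [t,t+1]}" "card {t+1..<2*t+1} \<le> t" by (auto simp:)
    moreover have "\<forall>r < length c'. \<exists>y. y \<in> vecs A (n_src [t,t+1]) \<and>
              (\<forall>e < n_src [t,t+1]. e \<notin> {t+1..<2*t+1} \<longrightarrow> y ! e = c' ! r ! e) \<and> zs ! r = net_out [t,t+1] F y"
    proof (intro allI impI)
      fix r assume "r < length c'"
      then show "\<exists>y. y \<in> vecs A (n_src [t,t+1]) \<and>
              (\<forall>e < n_src [t,t+1]. e \<notin> {t+1..<2*t+1} \<longrightarrow> y ! e = c' ! r ! e) \<and> zs ! r = net_out [t,t+1] F y"
      proof (intro exI[of _ "ys r"] conjI allI impI)
        show "ys r \<in> vecs A (n_src [t,t+1])" using ysv lc lc' \<open>r < length c'\<close> by simp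
        show "zs ! r = net_out [t,t+1] F (ys r)" using zsn lc lc' \<open>r < length c'\<close> by simp
        fix e assume "e < n_src [t,t+1]" "e \<notin> {t+1..<2*t+1}"
        then have "e = 0 \<or> (1 \<le> e \<and> e \<le> t)" by auto
        then show "ys r ! e = c' ! r ! e" using eq0 lc lc' \<open>r < length c'\<close> ysn by auto
      qed
    qed
    ultimately show ?thesis using lc lc' by (auto simp: zs_def)
  qed
  ultimately show ?thesis by blast
qed

lemma upper:
  assumes "alphabet A" and U: "unambiguous sc A [t,t+1] F t i C"
  shows "card C \<le> card A ^ i"
proof (rule ccontr)
  assume "\<not> card C \<le> card A ^ i"
  hence big: "card A ^ i < card C" by simp
  let ?L = "{xs. set xs \<subseteq> A \<and> length xs = i}"
  have fA: "finite A" using assms(1) by (simp add: alphabet_def)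
  have cL: "card ?L = card A ^ i" using fA by (simp add: card_lists_length_eq)
  have fL: "finite ?L" using fA by (simp add: finite_lists_length_eq)
  have Csub: "C \<subseteq> {xs. length xs = i \<and> (\<forall>r < i. xs ! r \<in> vecs A (n_src [t,t+1]))}"
    and disj: "\<forall>c \<in> C. \<forall>c' \<in> C. c \<noteq> c' \<longrightarrow> fanout_multi sc A [t,t+1] F t c \<inter> fanout_multi sc A [t,t+1] F t c' = {}"
    using U by (auto simp: unambiguous_def)
  define phi where "phi c = map (\<lambda>x. x!0) c" for c :: "'a list list"
  have img: "phi ` C \<subseteq> ?L"
  proof
    fix z assume "z \<in> phi ` C"
    then obtain c where c: "c \<in> C" "z = phi c" by auto
    have "\<forall>r<i. c!r!0 \<in> A" using Csub c(1) vecs_nth[of _ A "2*t+1" 0] by (auto simp:)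
    then show "z \<in> ?L" using Csub c by (auto simp: phi_def set_conv_nth)
  qed
  have "\<not> inj_on phi C"
  proof
    assume "inj_on phi C"
    then have "card C \<le> card ?L" using card_inj_on_le[OF _ img fL] by simp
    then show False using big cL by simp
  qed
  then obtain c c' where cc: "c \<in> C" "c' \<in> C" "c \<noteq> c'" "phi c = phi c'"
    unfolding inj_on_def by blast
  have lc: "length c = i" "length c' = i" using Csub cc by auto
  have eq0: "\<forall>r<i. c!r!0 = c'!r!0"
  proof (intro allI impI)
    fix r assume "r < i"
    then have "phi c ! r = phi c' ! r" using cc by simp
    then show "c!r!0 = c'!r!0" using lc \<open>r < i\<close> by (simp add: phi_def)
  qed
  have vc: "\<forall>r<i. c!r \<in> vecs A (2*t+1)" "\<forall>r<i. c'!r \<in> vecs A (2*t+1)"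
    using Csub cc by auto
  obtain zs where "zs \<in> fanout_multi A1 A [t,t+1] F t c" "zs \<in> fanout_multi A1 A [t,t+1] F t c'"
    using collide[OF lc vc(1) vc(2) eq0, where F=F] by blast
  then have "zs \<in> fanout_multi sc A [t,t+1] F t c \<inter> fanout_multi sc A [t,t+1] F t c'"
    using A1_sub by blast
  then show False using disj cc by blast
qed

definition cnt :: "'a \<Rightarrow> 'a list \<Rightarrow> nat" where
  "cnt z v = length (filter (\<lambda>w. w = z) v)"

definition mx :: "'a list \<Rightarrow> nat" where
  "mx v = Max ((\<lambda>z. cnt z v) ` set v)"

definition md :: "'a list \<Rightarrow> 'a" where
  "md v = (SOME z. z \<in> set v \<and> cnt z v = mx v)"

definition sig :: "'a list \<Rightarrow> 'a \<times> nat" where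
  "sig v = (md v, mx v)"

lemma cnt_two: "a \<noteq> b \<Longrightarrow> cnt a v + cnt b v \<le> length v"
proof -
  assume ab: "a \<noteq> b"
  have "length (filter (\<lambda>w. w = b) v) \<le> length (filter (\<lambda>w. \<not> w = a) v)"
  proof -
    have "filter (\<lambda>w. w = b) v = filter (\<lambda>w. w = b) (filter (\<lambda>w. \<not> w = a) v)"
      using ab by (auto simp: filter_filter intro!: filter_cong)
    then show ?thesis by (metis length_filter_le)
  qed
  moreover have "length (filter (\<lambda>w. w = a) v) + length (filter (\<lambda>w. \<not> w = a) v) = length v"
    by (rule sum_length_filter_compl)
  ultimately show ?thesis unfolding cnt_def by linarith
qed

lemma cnt_append: "cnt z (u @ v) = cnt z u + cnt z v"
  by (simp add: cnt_def)

lemma cnt_le_mx: "cnt z v \<le> mx v"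
proof (cases "z \<in> set v")
  case True then show ?thesis unfolding mx_def by (intro Max_ge) auto
next
  case False then have "cnt z v = 0" unfolding cnt_def by (auto simp: filter_empty_conv)
  then show ?thesis by simp
qed

lemma md_prop: "v \<noteq> [] \<Longrightarrow> md v \<in> set v \<and> cnt (md v) v = mx v"
proof -
  assume "v \<noteq> []"
  then have "mx v \<in> (\<lambda>z. cnt z v) ` set v" unfolding mx_def by (intro Max_in) auto
  then have "\<exists>z. z \<in> set v \<and> cnt z v = mx v" by auto
  then show ?thesis unfolding md_def by (rule someI_ex)
qed

lemma cnt_pos: "z \<in> set v \<Longrightarrow> 1 \<le> cnt z v"
  unfolding cnt_def by (cases "filter (\<lambda>w. w = z) v") (auto simp: filter_empty_conv)

lemma cnt_le_len: "cnt z v \<le> length v"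
  unfolding cnt_def by simp

lemma key:
  assumes "sig v = sig v'" "v \<noteq> []" "v' \<noteq> []" "length v = n" "length v' = n" "a \<noteq> b"
  shows "cnt a v + cnt b v' \<le> n"
proof -
  have m: "md v = md v'" and c: "mx v = mx v'" using assms(1) by (auto simp: sig_def)
  have h1: "cnt (md v) v = mx v" "cnt (md v) v' = mx v" using md_prop[OF assms(2)] md_prop[OF assms(3)] m c by auto
  have h2: "cnt a v \<le> mx v" "cnt b v' \<le> mx v" using cnt_le_mx c by metis+
  show ?thesis
  proof (cases "a = md v")
    case True
    then have "b \<noteq> md v" using assms by auto
    then have "cnt (md v) v' + cnt b v' \<le> n" using cnt_two assms by metis
    then show ?thesis using True h1 by simp
  next
    case F1: False
    then have x1: "cnt (md v) v + cnt a v \<le> n" using cnt_two assms by metis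
    show ?thesis
    proof (cases "b = md v")
      case True then show ?thesis using x1 h1 by simp
    next
      case False
      then have "cnt (md v) v' + cnt b v' \<le> n" using cnt_two assms by metis
      then show ?thesis using x1 h1 h2 by linarith
    qed
  qed
qed

lemma pow_bound: "3 \<le> (t::nat) \<Longrightarrow> t + 1 \<le> 2 ^ (t - 1)"
proof (induction t rule: dec_induct)
  case base then show ?case by simp
next
  case (step n)
  then have "(2::nat) ^ (Suc n - 1) = 2 * 2 ^ (n - 1)" by (cases n) auto
  then show ?case using step by simp
qed

lemma num_bound:
  assumes "2 \<le> (k::nat)" "2 \<le> t" "\<not> (t = 2 \<and> k = 2)"
  shows "k * (t + 1) \<le> k ^ t"
proof -
  have "t + 1 \<le> k ^ (t - 1)"
  proof (cases "t = 2")
    case True then show ?thesis using assms by auto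
  next
    case False
    then have "t + 1 \<le> 2 ^ (t - 1)" using pow_bound assms by simp
    also have "\<dots> \<le> k ^ (t - 1)" using assms by (simp add: power_mono)
    finally show ?thesis .
  qed
  then have "k * (t + 1) \<le> k * k ^ (t - 1)" by (rule mult_le_mono2)
  also have "\<dots> = k ^ t" using assms by (cases t) auto
  finally show ?thesis .
qed

lemma card_vecs: "finite A \<Longrightarrow> card (vecs A n) = card A ^ n"
  unfolding vecs_def using card_lists_length_eq[of A n] by (simp add: conj_commute)

lemma finite_vecs: "finite A \<Longrightarrow> finite (vecs A n)"
  unfolding vecs_def using finite_lists_length_eq[of A n] by (simp add: conj_commute)

lemma sig_range:
  assumes "alphabet A" "2 \<le> t"
  shows "card (sig ` vecs A (t+1)) \<le> card (vecs A t)"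
proof -
  have fA: "finite A" and cA: "2 \<le> card A" using assms by (auto simp: alphabet_def)
  have gen: "sig ` vecs A (t+1) \<subseteq> A \<times> {1..t+1}"
  proof
    fix s assume "s \<in> sig ` vecs A (t+1)"
    then obtain v where v: "v \<in> vecs A (t+1)" "s = sig v" by auto
    then have ne: "v \<noteq> []" and lv: "length v = t+1" and sv: "set v \<subseteq> A" by (auto simp: vecs_def)
    have "md v \<in> A" using md_prop[OF ne] sv by auto
    moreover have "1 \<le> mx v" using md_prop[OF ne] cnt_pos by metis
    moreover have "mx v \<le> t+1" using md_prop[OF ne] cnt_le_len lv by metis
    ultimately show "s \<in> A \<times> {1..t+1}" using v by (auto simp: sig_def)
  qed
  show ?thesis
  proof (cases "t = 2 \<and> card A = 2")
    case True
    then obtain p q where pq: "A = {p, q}" "p \<noteq> q" by (meson card_2_iff)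
    have sp: "sig ` vecs A (t+1) \<subseteq> A \<times> {2..3}"
    proof
      fix s assume "s \<in> sig ` vecs A (t+1)"
      then obtain v where v: "v \<in> vecs A (t+1)" "s = sig v" by auto
      then have ne: "v \<noteq> []" and lv: "length v = 3" and sv: "set v \<subseteq> {p,q}"
        using True pq by (auto simp: vecs_def)
      have "filter (\<lambda>w. \<not> w = p) v = filter (\<lambda>w. w = q) v"
        using sv pq by (intro filter_cong) auto
      then have "cnt p v + cnt q v = 3"
        using sum_length_filter_compl[of "\<lambda>w. w = p" v] lv by (simp add: cnt_def)
      moreover have "cnt p v \<le> mx v" "cnt q v \<le> mx v" by (rule cnt_le_mx)+
      ultimately have "2 \<le> mx v" by linarith
      moreover have "s \<in> A \<times> {1..t+1}" using gen v by auto
      ultimately show "s \<in> A \<times> {2..3}" using v True by (auto simp: sig_def)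
    qed
    have "card (sig ` vecs A (t+1)) \<le> card (A \<times> {2..3::nat})"
      using fA by (intro card_mono[OF _ sp]) auto
    also have "\<dots> = 4" using True by (simp add: card_cartesian_product)
    also have "\<dots> = card (vecs A t)" using True fA by (simp add: card_vecs)
    finally show ?thesis .
  next
    case False
    have "card (sig ` vecs A (t+1)) \<le> card (A \<times> {1..t+1})"
      using fA by (intro card_mono[OF _ gen]) auto
    also have "\<dots> = card A * (t+1)" by (simp add: card_cartesian_product)
    also have "\<dots> \<le> card A ^ t" using num_bound[OF cA assms(2) False] .
    also have "\<dots> = card (vecs A t)" using fA by (simp add: card_vecs)
    finally show ?thesis .
  qed
qed

lemma fanout_count:
  assumes "z \<in> fanout A [t,t+1] F t (replicate (2*t+1) a)"
  shows "\<exists>y. y \<in> vecs A (2*t+1) \<and> z = net_out [t,t+1] F y \<and> t + 1 \<le> cnt a y"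
proof -
  from assms obtain y W where y: "z = net_out [t,t+1] F y" "W \<subseteq> {..<2*t+1}" "card W \<le> t"
    "y \<in> vecs A (2*t+1)" "\<forall>e < 2*t+1. e \<notin> W \<longrightarrow> y ! e = replicate (2*t+1) a ! e"
    unfolding fanout_def by auto
  have ly: "length y = 2*t+1" using y(4) by (simp add: vecs_def)
  have "\<forall>e < 2*t+1. e \<notin> W \<longrightarrow> y ! e = a"
    using y(5) by (metis nth_replicate)
  then have "{e. e < length y \<and> \<not> y!e = a} \<subseteq> W" using ly by auto
  then have "card {e. e < length y \<and> \<not> y!e = a} \<le> card W"
    using y(2) by (intro card_mono) (auto intro: finite_subset)
  then have "length (filter (\<lambda>w. \<not> w = a) y) \<le> t"
    using y(3) by (simp add: length_filter_conv_card)
  moreover have "length (filter (\<lambda>w. w = a) y) + length (filter (\<lambda>w. \<not> w = a) y) = length y"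
    by (rule sum_length_filter_compl)
  ultimately have "t + 1 \<le> cnt a y" using ly by (simp add: cnt_def)
  then show ?thesis using y by auto
qed

lemma oneshot:
  assumes inj: "inj_on iota (sig ` vecs A (t+1))" and ab: "a \<noteq> b"
    and za: "z \<in> fanout A [t,t+1] [\<lambda>u. u, \<lambda>v. iota (sig v)] t (replicate (2*t+1) a)"
    and zb: "z \<in> fanout A [t,t+1] [\<lambda>u. u, \<lambda>v. iota (sig v)] t (replicate (2*t+1) b)"
  shows False
proof -
  obtain y where y: "y \<in> vecs A (2*t+1)" "z = net_out [t,t+1] [\<lambda>u. u, \<lambda>v. iota (sig v)] y" "t + 1 \<le> cnt a y"
    using fanout_count[OF za] by blast
  obtain y' where y': "y' \<in> vecs A (2*t+1)" "z = net_out [t,t+1] [\<lambda>u. u, \<lambda>v. iota (sig v)] y'" "t + 1 \<le> cnt b y'"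
    using fanout_count[OF zb] by blast
  define u where "u = take t y"
  define v where "v = drop t y"
  define u' where "u' = take t y'"
  define v' where "v' = drop t y'"
  have ly: "length y = 2*t+1" "length y' = 2*t+1" using y y' by (auto simp: vecs_def)
  have yy: "y = u @ v" "y' = u' @ v'" by (simp_all add: u_def v_def u'_def v'_def)
  have tk: "take (Suc t) (drop t y) = v" "take (Suc t) (drop t y') = v'"
    using ly by (simp_all add: v_def v'_def)
  have lu: "length u = t" "length u' = t" using ly by (auto simp: u_def u'_def)
  have "u @ iota (sig v) = u' @ iota (sig v')"
    using y(2) y'(2) tk by (simp add: net_out2 u_def u'_def)
  then have uu: "u = u'" and ii: "iota (sig v) = iota (sig v')" using lu by auto
  have vv: "v \<in> vecs A (t+1)" "v' \<in> vecs A (t+1)"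
    using y y' ly by (auto simp: vecs_def v_def v'_def dest: in_set_dropD)
  have "sig v = sig v'" using inj ii vv by (auto dest: inj_onD)
  moreover have "length v = t+1" "length v' = t+1" using vv by (auto simp: vecs_def)
  ultimately have k: "cnt a v + cnt b v' \<le> t+1" using key[OF _ _ _ _ _ ab] by fastforce
  have "cnt a u + cnt b u \<le> t" using cnt_two[OF ab, of u] lu by simp
  moreover have "t + 1 \<le> cnt a u + cnt a v" using y(3) yy by (simp add: cnt_append)
  moreover have "t + 1 \<le> cnt b u + cnt b v'" using y'(3) yy uu by (simp add: cnt_append)
  ultimately show False using k by linarith
qed

lemma multi_coord:
  assumes "zs \<in> fanout_multi sc A as F t xs" "r < length xs"
  shows "zs ! r \<in> fanout A as F t (xs ! r)"
proof (cases sc)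
  case A1
  have "zs \<in> fanout_multi A2 A as F t xs" using A1 assms(1) A1_sub by blast
  then show ?thesis using assms(2) by simp
next
  case A2
  then show ?thesis using assms by auto
qed

lemma lower:
  assumes "alphabet A" "2 \<le> t"
  shows "\<exists>F C. network_code A [t,t+1] [t,t] F \<and> unambiguous sc A [t,t+1] F t i C \<and> card C = card A ^ i"
proof -
  have fA: "finite A" and cA: "2 \<le> card A" using assms by (auto simp: alphabet_def)
  obtain iota where io: "iota ` (sig ` vecs A (t+1)) \<subseteq> vecs A t" "inj_on iota (sig ` vecs A (t+1))"
    using card_le_inj[OF _ _ sig_range[OF assms]] fA finite_vecs by blast
  define F where "F = ([\<lambda>u. u, \<lambda>v. iota (sig v)] :: ('a list \<Rightarrow> 'a list) list)"
  have nc: "network_code A [t,t+1] [t,t] F"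
  proof -
    have "\<forall>j < 2. \<forall>u \<in> vecs A ([t,t+1] ! j). (F ! j) u \<in> vecs A ([t,t] ! j)"
    proof (intro allI impI ballI)
      fix j u assume j: "j < (2::nat)" and u: "u \<in> vecs A ([t,t+1] ! j)"
      show "(F ! j) u \<in> vecs A ([t,t] ! j)"
      proof (cases "j = 0")
        case True then show ?thesis using u by (simp add: F_def)
      next
        case False
        then have "j = 1" using j by simp
        then show ?thesis using u io(1) by (auto simp: F_def)
      qed
    qed
    then show ?thesis unfolding network_code_def F_def by simp
  qed
  define R where "R a = replicate (2*t+1) a" for a :: 'a
  let ?L = "{xs. set xs \<subseteq> A \<and> length xs = i}"
  define C where "C = map R ` ?L"
  have injR: "inj R" unfolding R_def by (rule injI) simp
  have cC: "card C = card A ^ i"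
    unfolding C_def using card_image[OF inj_on_subset[OF inj_mapI[OF injR], of ?L]] fA
    by (simp add: card_lists_length_eq)
  from cA obtain a0 where a0: "a0 \<in> A" by (metis card.empty ex_in_conv not_numeral_le_zero)
  have "map R (replicate i a0) \<in> C" unfolding C_def using a0
    by (intro image_eqI[where x="replicate i a0"]) auto
  then have ne: "C \<noteq> {}" by auto
  have sub: "C \<subseteq> {xs. length xs = i \<and> (\<forall>r < i. xs ! r \<in> vecs A (n_src [t,t+1]))}"
  proof
    fix c assume "c \<in> C"
    then obtain xs where xs: "c = map R xs" "set xs \<subseteq> A" "length xs = i" unfolding C_def by blast
    have "\<forall>r<i. c ! r \<in> vecs A (n_src [t,t+1])"
    proof (intro allI impI)
      fix r assume "r < i"
      then have "xs ! r \<in> A" using xs nth_mem by blast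
      then show "c ! r \<in> vecs A (n_src [t,t+1])" using xs \<open>r < i\<close>
        by (auto simp add: R_def vecs_def n_src_def set_replicate_conv_if)
    qed
    then show "c \<in> {xs. length xs = i \<and> (\<forall>r < i. xs ! r \<in> vecs A (n_src [t,t+1]))}"
      using xs by simp
  qed
  have dis: "\<forall>c \<in> C. \<forall>c' \<in> C. c \<noteq> c' \<longrightarrow> fanout_multi sc A [t,t+1] F t c \<inter> fanout_multi sc A [t,t+1] F t c' = {}"
  proof (intro ballI impI)
    fix c c' assume c: "c \<in> C" "c' \<in> C" "c \<noteq> c'"
    then obtain xs xs' where x: "c = map R xs" "c' = map R xs'" "length xs = i" "length xs' = i"
      unfolding C_def by auto
    then obtain r where r: "r < i" "xs ! r \<noteq> xs' ! r" using c(3) by (metis nth_equalityI)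
    show "fanout_multi sc A [t,t+1] F t c \<inter> fanout_multi sc A [t,t+1] F t c' = {}"
    proof (rule ccontr)
      assume "fanout_multi sc A [t,t+1] F t c \<inter> fanout_multi sc A [t,t+1] F t c' \<noteq> {}"
      then obtain zs where "zs \<in> fanout_multi sc A [t,t+1] F t c" "zs \<in> fanout_multi sc A [t,t+1] F t c'" by blast
      then have "zs ! r \<in> fanout A [t,t+1] F t (c ! r)" "zs ! r \<in> fanout A [t,t+1] F t (c' ! r)"
        using multi_coord[of zs sc A "[t,t+1]" F t c r] multi_coord[of zs sc A "[t,t+1]" F t c' r] r x by simp_all
      then have "zs ! r \<in> fanout A [t,t+1] F t (replicate (2*t+1) (xs!r))"
        "zs ! r \<in> fanout A [t,t+1] F t (replicate (2*t+1) (xs'!r))"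
        using r x by (simp_all add: R_def)
      then show False using oneshot[OF io(2) r(2)] unfolding F_def by blast
    qed
  qed
  have "unambiguous sc A [t,t+1] F t i C" unfolding unambiguous_def using ne sub dis by blast
  then show ?thesis using nc cC by blast
qed

theorem proposition4p5:
  fixes A :: "'a set" and t i :: nat and sc :: scenario
  assumes "alphabet A" and "t \<ge> 2" and "i > 0"
  shows "capacity sc A [t, t + 1] [t, t] t i = 1"
proof -
  have fA: "finite A" and cA: "2 \<le> card A" using assms by (auto simp: alphabet_def)
  define b where "b = real (card A)"
  have b1: "1 < b" using cA by (simp add: b_def)
  let ?S = "{log (real (card A)) (real (card C)) / real i | F C.
      network_code A [t, t + 1] [t, t] F \<and> unambiguous sc A [t, t + 1] F t i C}"
  have le: "log b (real k) / real i \<le> 1" if "k \<le> card A ^ i" for k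
  proof (cases "k = 0")
    case True then show ?thesis by (simp add: log_def)
  next
    case False
    have "log b (real k) \<le> log b (b ^ i)"
      using False b1 that by (subst log_le_cancel_iff) (auto simp: b_def simp flip: of_nat_power)
    also have "\<dots> = real i" using b1 by (simp add: log_nat_power)
    finally show ?thesis using assms(3) by simp
  qed
  have sub: "?S \<subseteq> (\<lambda>k. log b (real k) / real i) ` {..card A ^ i}"
    using upper[OF assms(1)] by (auto simp: b_def)
  have fin: "finite ?S" by (rule finite_subset[OF sub]) auto
  have bound: "\<forall>s \<in> ?S. s \<le> 1"
  proof
    fix s assume "s \<in> ?S"
    then obtain k where "k \<le> card A ^ i" "s = log b (real k) / real i" using sub by blast
    then show "s \<le> 1" using le by simp
  qed
  obtain F C where FC: "network_code A [t,t+1] [t,t] F" "unambiguous sc A [t,t+1] F t i C" "card C = card A ^ i"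
    using lower[OF assms(1,2)] by blast
  have "real (card C) = b ^ i" using FC(3) by (simp add: b_def)
  then have "log b (real (card C)) = real i" using b1 by (simp add: log_nat_power)
  then have "log b (real (card C)) / real i = 1" using assms(3) by simp
  then have mem: "1 \<in> ?S" using FC(1,2) unfolding b_def by (intro CollectI exI[of _ F] exI[of _ C]) simp
  show ?thesis unfolding capacity_def
    by (rule Max_eqI[OF fin]) (use bound mem in auto)
qed

end
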